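(* Let $(A,\succ,\prec)$ be a Leibniz-dendriform algebra and $r\in A\otimes A$ with $S(r)=0$, $r+\tau(r)$ invariant and $T_{r+\tau(r)}:A^*\to A$ a linear isomorphism (i.e. $(A,\succ,\prec,\Delta_{\succ,r},\Delta_{\prec,r})$ is factorizable). Define $\Phi:A^*\to A\oplus A$ by $\Phi(\zeta)=(T_r(\zeta),-T_{\tau(r)}(\zeta))$. Then $\mathrm{Im}(\Phi)$ is a Leibniz-dendriform subalgebra of the direct product Leibniz-dendriform algebra $A\oplus A$ (componentwise operations), and $\Phi$ is an isomorphism of Leibniz-dendriform algebras from $(A^*,\succ_r,\prec_r)$ onto $\mathrm{Im}(\Phi)$. Moreover, every $x\in A$ has a unique decomposition $x=x_1-x_2$ with $(x_1,x_2)\in\mathrm{Im}(\Phi)$.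
   Context: $\langle\cdot,\cdot\rangle$ is the natural pairing, $I$ the identity, $\tau(a\otimes b)=b\otimes a$. A Leibniz-dendriform algebra is a vector space $A$ with bilinear operations $\succ,\prec$ such that, with $x\circ y:=x\succ y+x\prec y$, for all $x,y,z$: $(x\circ y)\succ z=x\succ(y\succ z)-y\succ(x\succ z)$, $y\prec(x\circ z)+(x\succ y)\prec z=x\succ(y\prec z)$, $x\prec(y\circ z)=(x\prec y)\prec z+y\succ(x\prec z)$. Write $x\odot y:=x\succ y+y\prec x$, $x\star y:=x\circ y+y\circ x$; $L_*(x)y=x*y$, $R_*(x)y=y*x$; $L_\odot:=L_\succ+R_\prec$, $R_\odot:=R_\succ+L_\prec$, $L_\star:=L_\circ+R_\circ$; for $f:A\to\mathrm{End}(A)$, $f^*:A\to\mathrm{End}(A^* )$ is $\langle f^*(x)\xi,v\rangle=-\langle\xi,f(x)v\rangle$. For $r=\sum_ia_i\otimes b_i$: $T_r:A^*\to A$, $\langle T_r(\zeta),\eta\rangle=\langle r,\zeta\otimes\eta\rangle$; $S(r):=\sum_{i,j}\big(a_i\otimes a_j\otimes (b_j\circ b_i)-a_i\otimes (b_i\odot a_j)\otimes b_j-(a_i\succ a_j)\otimes b_i\otimes b_j\big)$. $s\in A\otimes A$ is invariant if for all $x$: $(L_\odot(x)\otimes I-I\otimes R_\circ(x))s=0$ and $(L_\star(x)\otimes I-I\otimes R_\prec(x))\tau(s)=0$. Operations on $A^*$: $\zeta\succ_r\eta=L_\circ^*(T_r(\zeta))\eta-R_\odot^*(T_{\tau(r)}(\eta))\zeta$,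 $\zeta\prec_r\eta=L_\prec^*(T_{\tau(r)}(\zeta))\eta-L_\star^*(T_r(\eta))\zeta$ (the duals of $\Delta_{\succ,r}(x)=(L_\odot(x)\otimes I-I\otimes R_\circ(x))r$, $\Delta_{\prec,r}(x)=(L_\star(x)\otimes I-I\otimes R_\prec(x))\tau(r)$). *)

theory Defs
  imports Main
begin

text \<open>A finite-dimensional vector space A over a field 'k is modelled in coordinates
  w.r.t. a basis indexed by a finite type 'n: vectors are functions 'n \<Rightarrow> 'k.
  The dual space A* is identified with the same type via the dual basis, so the
  natural pairing is the dot product.  Tensors in A\<otimes>A (resp. A\<otimes>A\<otimes>A) are
  their coefficient arrays w.r.t. e_p\<otimes>e_q (resp. e_p\<otimes>e_q\<otimes>e_s).\<close>

type_synonym ('k,'n) vect = "'n \<Rightarrow> 'k"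
type_synonym ('k,'n) tens2 = "'n \<Rightarrow> 'n \<Rightarrow> 'k"
type_synonym ('k,'n) tens3 = "'n \<Rightarrow> 'n \<Rightarrow> 'n \<Rightarrow> 'k"
type_synonym ('k,'n) bop = "('k,'n) vect \<Rightarrow> ('k,'n) vect \<Rightarrow> ('k,'n) vect"

definition vadd :: "('k::field,'n) vect \<Rightarrow> ('k,'n) vect \<Rightarrow> ('k,'n) vect" where
  "vadd u v = (\<lambda>i. u i + v i)"
definition vsub :: "('k::field,'n) vect \<Rightarrow> ('k,'n) vect \<Rightarrow> ('k,'n) vect" where
  "vsub u v = (\<lambda>i. u i - v i)"
definition vneg :: "('k::field,'n) vect \<Rightarrow> ('k,'n) vect" where
  "vneg u = (\<lambda>i. - u i)"
definition vscale :: "'k::field \<Rightarrow> ('k,'n) vect \<Rightarrow> ('k,'n) vect" where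
  "vscale c u = (\<lambda>i. c * u i)"
definition vzero :: "('k::field,'n) vect" where
  "vzero = (\<lambda>i. 0)"

definition ebas :: "'n \<Rightarrow> ('k::field,'n) vect" where
  "ebas j = (\<lambda>i. if i = j then 1 else 0)"

definition pair :: "('k::field,'n::finite) vect \<Rightarrow> ('k,'n) vect \<Rightarrow> 'k" where
  "pair \<xi> v = (\<Sum>i\<in>UNIV. \<xi> i * v i)"

definition bilinear_op :: "('k::field,'n) bop \<Rightarrow> bool" where
  "bilinear_op f \<longleftrightarrow>
     (\<forall>x y z. f (vadd x y) z = vadd (f x z) (f y z)) \<and>
     (\<forall>x y z. f x (vadd y z) = vadd (f x y) (f x z)) \<and>
     (\<forall>c x y. f (vscale c x) y = vscale c (f x y)) \<and>
     (\<forall>c x y. f x (vscale c y) = vscale c (f x y))"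

definition circ_op :: "('k::field,'n) bop \<Rightarrow> ('k,'n) bop \<Rightarrow> ('k,'n) bop" where
  "circ_op sc pr x y = vadd (sc x y) (pr x y)"

definition odot_op :: "('k::field,'n) bop \<Rightarrow> ('k,'n) bop \<Rightarrow> ('k,'n) bop" where
  "odot_op sc pr x y = vadd (sc x y) (pr y x)"

definition star_op :: "('k::field,'n) bop \<Rightarrow> ('k,'n) bop \<Rightarrow> ('k,'n) bop" where
  "star_op sc pr x y = vadd (circ_op sc pr x y) (circ_op sc pr y x)"

definition LD_alg :: "('k::field,'n) bop \<Rightarrow> ('k,'n) bop \<Rightarrow> bool" where
  "LD_alg sc pr \<longleftrightarrow> bilinear_op sc \<and> bilinear_op pr \<and>
    (\<forall>x y z. sc (circ_op sc pr x y) z = vsub (sc x (sc y z)) (sc y (sc x z))) \<and>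
    (\<forall>x y z. vadd (pr y (circ_op sc pr x z)) (pr (sc x y) z) = sc x (pr y z)) \<and>
    (\<forall>x y z. pr x (circ_op sc pr y z) = vadd (pr (pr x y) z) (sc y (pr x z)))"

text \<open>Dual representation: for f : A \<rightarrow> End(A), \<langle>f^*(x)\<xi>, v\<rangle> = -\<langle>\<xi>, f(x)v\<rangle>.
  Here f is given as a two-argument function, f x v = f(x)v.\<close>
definition dual_rep :: "(('k::field,'n::finite) vect \<Rightarrow> ('k,'n) vect \<Rightarrow> ('k,'n) vect)
    \<Rightarrow> ('k,'n) vect \<Rightarrow> ('k,'n) vect \<Rightarrow> ('k,'n) vect" where
  "dual_rep f x \<xi> = (\<lambda>j. - pair \<xi> (f x (ebas j)))"

definition flip :: "('k::field,'n) tens2 \<Rightarrow> ('k,'n) tens2" where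
  "flip s = (\<lambda>p q. s q p)"

definition tadd :: "('k::field,'n) tens2 \<Rightarrow> ('k,'n) tens2 \<Rightarrow> ('k,'n) tens2" where
  "tadd s t = (\<lambda>p q. s p q + t p q)"

text \<open>T_r : A* \<rightarrow> A, \<langle>T_r(\<zeta>), \<eta>\<rangle> = \<langle>r, \<zeta>\<otimes>\<eta>\<rangle>.\<close>
definition Tmap :: "('k::field,'n::finite) tens2 \<Rightarrow> ('k,'n) vect \<Rightarrow> ('k,'n) vect" where
  "Tmap r \<zeta> = (\<lambda>q. \<Sum>p\<in>UNIV. r p q * \<zeta> p)"

text \<open>(F \<otimes> G) s for linear maps F, G on A.\<close>
definition tapp :: "(('k::field,'n::finite) vect \<Rightarrow> ('k,'n) vect) \<Rightarrow> (('k,'n) vect \<Rightarrow> ('k,'n) vect)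
    \<Rightarrow> ('k,'n) tens2 \<Rightarrow> ('k,'n) tens2" where
  "tapp F G s = (\<lambda>a b. \<Sum>p\<in>UNIV. \<Sum>q\<in>UNIV. s p q * F (ebas p) a * G (ebas q) b)"

definition invariant :: "('k::field,'n::finite) bop \<Rightarrow> ('k,'n) bop \<Rightarrow> ('k,'n) tens2 \<Rightarrow> bool" where
  "invariant sc pr s \<longleftrightarrow>
    (\<forall>x. \<forall>a b. tapp (\<lambda>v. odot_op sc pr x v) id s a b - tapp id (\<lambda>v. circ_op sc pr v x) s a b = 0) \<and>
    (\<forall>x. \<forall>a b. tapp (\<lambda>v. star_op sc pr x v) id (flip s) a b - tapp id (\<lambda>v. pr v x) (flip s) a b = 0)"

definition Sr :: "('k::field,'n::finite) bop \<Rightarrow> ('k,'n) bop \<Rightarrow> ('k,'n) tens2 \<Rightarrow> ('k,'n) tens3" where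
  "Sr sc pr r = (\<lambda>a b c. \<Sum>p\<in>UNIV. \<Sum>q\<in>UNIV. \<Sum>s\<in>UNIV. \<Sum>t\<in>UNIV. r p q * r s t *
      (ebas p a * ebas s b * circ_op sc pr (ebas t) (ebas q) c
       - ebas p a * odot_op sc pr (ebas q) (ebas s) b * ebas t c
       - sc (ebas p) (ebas s) a * ebas q b * ebas t c))"

definition succ_r :: "('k::field,'n::finite) bop \<Rightarrow> ('k,'n) bop \<Rightarrow> ('k,'n) tens2 \<Rightarrow> ('k,'n) bop" where
  "succ_r sc pr r \<zeta> \<eta> = vsub (dual_rep (\<lambda>x v. circ_op sc pr x v) (Tmap r \<zeta>) \<eta>)
                              (dual_rep (\<lambda>x v. odot_op sc pr v x) (Tmap (flip r) \<eta>) \<zeta>)"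

definition prec_r :: "('k::field,'n::finite) bop \<Rightarrow> ('k,'n) bop \<Rightarrow> ('k,'n) tens2 \<Rightarrow> ('k,'n) bop" where
  "prec_r sc pr r \<zeta> \<eta> = vsub (dual_rep (\<lambda>x v. pr x v) (Tmap (flip r) \<zeta>) \<eta>)
                              (dual_rep (\<lambda>x v. star_op sc pr x v) (Tmap r \<eta>) \<zeta>)"

definition Phi :: "('k::field,'n::finite) tens2 \<Rightarrow> ('k,'n) vect \<Rightarrow> ('k,'n) vect \<times> ('k,'n) vect" where
  "Phi r \<zeta> = (Tmap r \<zeta>, vneg (Tmap (flip r) \<zeta>))"

definition prod_op :: "('k::field,'n) bop \<Rightarrow> ('k,'n) vect \<times> ('k,'n) vect \<Rightarrow> ('k,'n) vect \<times> ('k,'n) vect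
    \<Rightarrow> ('k,'n) vect \<times> ('k,'n) vect" where
  "prod_op f u w = (f (fst u) (fst w), f (snd u) (snd w))"

definition padd :: "('k::field,'n) vect \<times> ('k,'n) vect \<Rightarrow> ('k,'n) vect \<times> ('k,'n) vect
    \<Rightarrow> ('k,'n) vect \<times> ('k,'n) vect" where
  "padd u w = (vadd (fst u) (fst w), vadd (snd u) (snd w))"

definition pscale :: "'k::field \<Rightarrow> ('k,'n) vect \<times> ('k,'n) vect \<Rightarrow> ('k,'n) vect \<times> ('k,'n) vect" where
  "pscale c u = (vscale c (fst u), vscale c (snd u))"

definition LD_subalg_prod :: "('k::field,'n) bop \<Rightarrow> ('k,'n) bop
    \<Rightarrow> (('k,'n) vect \<times> ('k,'n) vect) set \<Rightarrow> bool" where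
  "LD_subalg_prod sc pr B \<longleftrightarrow> (vzero, vzero) \<in> B \<and>
     (\<forall>u\<in>B. \<forall>w\<in>B. padd u w \<in> B) \<and> (\<forall>c. \<forall>u\<in>B. pscale c u \<in> B) \<and>
     (\<forall>u\<in>B. \<forall>w\<in>B. prod_op sc u w \<in> B \<and> prod_op pr u w \<in> B)"

end

theory Submission
  imports Defs
begin


lemma vadd_app: "vadd u v i = u i + v i" by (simp add: vadd_def)
lemma vsub_app: "vsub u v i = u i - v i" by (simp add: vsub_def)
lemma vneg_app: "vneg u i = - u i" by (simp add: vneg_def)
lemma vscale_app: "vscale c u i = c * u i" by (simp add: vscale_def)

lemma pair_vadd2[simp]: "pair x (vadd u v) = pair x u + pair x v"
  by (simp add: pair_def vadd_def distrib_left sum.distrib)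
lemma pair_vsub2[simp]: "pair x (vsub u v) = pair x u - pair x v"
  by (simp add: pair_def vsub_def right_diff_distrib sum_subtractf)
lemma pair_vneg2[simp]: "pair x (vneg u) = - pair x u"
  by (simp add: pair_def vneg_def sum_negf)
lemma pair_vscale2[simp]: "pair x (vscale c u) = c * pair x u"
  by (simp add: pair_def vscale_def sum_distrib_left algebra_simps)
lemma pair_vadd1[simp]: "pair (vadd u v) x = pair u x + pair v x"
  by (simp add: pair_def vadd_def distrib_right sum.distrib)
lemma pair_vscale1[simp]: "pair (vscale c u) x = c * pair u x"
  by (simp add: pair_def vscale_def sum_distrib_left algebra_simps)
lemma pair_vsub1[simp]: "pair (vsub u v) x = pair u x - pair v x"
  by (simp add: pair_def vsub_def left_diff_distrib sum_subtractf)
lemma pair_comm: "pair x y = pair y x"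
  by (simp add: pair_def mult.commute)
lemma pair_ebas[simp]: "pair (ebas i) u = u i"
proof -
  have "pair (ebas i) u = (\<Sum>j\<in>UNIV. if j = i then u i else 0)"
    unfolding pair_def by (rule sum.cong) (auto simp: ebas_def)
  then show ?thesis by simp
qed

lemma vec_eqI: assumes "\<And>w. pair w u = pair w v" shows "u = v"
proof
  fix i show "u i = v i" using assms[of "ebas i"] by simp
qed

lemma vsub_as: "vsub u v = vadd u (vscale (-1) v)" by (simp add: vsub_def vadd_def vscale_def)
lemma vneg_as: "vneg u = vscale (-1) u" by (simp add: vneg_def vscale_def)
lemma vzero_as: "vzero = vscale 0 u" by (simp add: vzero_def vscale_def)

lemma lf_expand:
  fixes \<phi> :: "('k::field,'n::finite) vect \<Rightarrow> 'k"
  assumes a: "\<And>x y. \<phi> (vadd x y) = \<phi> x + \<phi> y" and s: "\<And>c x. \<phi> (vscale c x) = c * \<phi> x"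
  shows "\<phi> v = (\<Sum>a\<in>UNIV. v a * \<phi> (ebas a))"
proof -
  have gen: "\<phi> (\<lambda>i. \<Sum>a\<in>S. v a * ebas a i) = (\<Sum>a\<in>S. v a * \<phi> (ebas a))" if "finite S" for S
    using that
  proof (induction S rule: finite_induct)
    case empty
    have "(\<lambda>i::'n. 0::'k) = vscale 0 v" by (simp add: vscale_def)
    then show ?case using s[of 0 v] by simp
  next
    case (insert a F)
    have "(\<lambda>i. \<Sum>b\<in>insert a F. v b * ebas b i) = vadd (vscale (v a) (ebas a)) (\<lambda>i. \<Sum>b\<in>F. v b * ebas b i)"
      using insert by (simp add: vadd_def vscale_def)
    then show ?case using insert a s by simp
  qed
  have "v = (\<lambda>i. \<Sum>a\<in>UNIV. v a * ebas a i)"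
    by (simp add: ebas_def if_distrib cong: if_cong)
  then show ?thesis using gen[of UNIV] by simp
qed

lemma ebas_mult1: "ebas p a * x = (if p = a then x else 0)" by (simp add: ebas_def)
lemma ebas_mult2: "x * ebas p a = (if p = a then x else 0)" by (simp add: ebas_def)
lemma if0_mult1: "(if P then y else 0) * (x::'a::field) = (if P then y * x else 0)" by simp
lemma if0_mult2: "(x::'a::field) * (if P then y else 0) = (if P then x * y else 0)" by simp
lemma if0_minus1: "(if P then y else 0) - (x::'a::field) = (if P then y - x else - x)" by simp
lemma sum_if0: "(\<Sum>x\<in>A. if P then f x else 0) = (if P then (\<Sum>x\<in>A. f x) else 0)" by simp

lemma bil_rules:
  assumes "bilinear_op f"
  shows "f (vadd x y) z = vadd (f x z) (f y z)" "f x (vadd y z) = vadd (f x y) (f x z)"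
    "f (vscale c x) y = vscale c (f x y)" "f x (vscale c y) = vscale c (f x y)"
    "f (vneg x) y = vneg (f x y)" "f x (vneg y) = vneg (f x y)"
    "f (vsub x y) z = vsub (f x z) (f y z)" "f x (vsub y z) = vsub (f x y) (f x z)"
  using assms unfolding bilinear_op_def
  by (simp_all add: vneg_as vsub_as)

lemma Tmap_rules:
  "Tmap r (vadd x y) = vadd (Tmap r x) (Tmap r y)"
  "Tmap r (vscale c x) = vscale c (Tmap r x)"
  "Tmap r (vneg x) = vneg (Tmap r x)"
  "Tmap r (vsub x y) = vsub (Tmap r x) (Tmap r y)"
  by (auto simp: Tmap_def vadd_def vscale_def vneg_def vsub_def sum.distrib sum_distrib_left
      sum_negf sum_subtractf algebra_simps)

lemma Tmap_adj: "pair w (Tmap r z) = pair z (Tmap (flip r) w)"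
  unfolding pair_def Tmap_def flip_def
  by (simp add: sum_distrib_left, subst sum.swap) (simp add: algebra_simps)

lemma flip_flip[simp]: "flip (flip r) = r" by (simp add: flip_def)
lemma flip_sym: "flip (tadd r (flip r)) = tadd r (flip r)" by (auto simp: flip_def tadd_def add.commute)
lemma Tmap_tadd: "Tmap (tadd r s) v = vadd (Tmap r v) (Tmap s v)"
  by (simp add: Tmap_def tadd_def vadd_def distrib_right sum.distrib)
lemma Tmap_ebas: "Tmap r (ebas b) = (\<lambda>q. r b q)"
  by (simp add: Tmap_def ebas_mult2)

lemma dual_rep_pair:
  assumes "\<And>u v. f x (vadd u v) = vadd (f x u) (f x v)" "\<And>c u. f x (vscale c u) = vscale c (f x u)"
  shows "pair (dual_rep f x \<xi>) v = - pair \<xi> (f x v)"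
proof -
  have "- pair \<xi> (f x v) = (\<Sum>a\<in>UNIV. v a * (- pair \<xi> (f x (ebas a))))"
    by (rule lf_expand[where \<phi>="\<lambda>v. - pair \<xi> (f x v)"]) (simp_all add: assms)
  then show ?thesis by (simp add: pair_def dual_rep_def mult.commute)
qed

lemma bil_expand:
  assumes "bilinear_op f"
  shows "pair w (f u v) = (\<Sum>j\<in>UNIV. \<Sum>k\<in>UNIV. u j * v k * pair w (f (ebas j) (ebas k)))"
proof -
  have "pair w (f u v) = (\<Sum>j\<in>UNIV. u j * pair w (f (ebas j) v))"
    by (rule lf_expand[where \<phi>="\<lambda>u. pair w (f u v)"]) (simp_all add: bil_rules[OF assms])
  also have "\<dots> = (\<Sum>j\<in>UNIV. u j * (\<Sum>k\<in>UNIV. v k * pair w (f (ebas j) (ebas k))))"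
    by (rule sum.cong, simp, rule arg_cong[where f="\<lambda>t. _ * t"],
        rule lf_expand[where \<phi>="\<lambda>v. pair w (f (ebas _) v)"]) (simp_all add: bil_rules[OF assms])
  finally show ?thesis by (simp add: sum_distrib_left mult.assoc)
qed




definition lf :: "(('k::field,'n::finite) vect \<Rightarrow> 'k) \<Rightarrow> bool" where
  "lf \<phi> \<longleftrightarrow> (\<forall>x y. \<phi> (vadd x y) = \<phi> x + \<phi> y) \<and> (\<forall>c x. \<phi> (vscale c x) = c * \<phi> x)"

lemma lf_zero: assumes "lf \<phi>" "\<And>a. \<phi> (ebas a) = 0" shows "\<phi> v = 0"
  using lf_expand[of \<phi> v] assms unfolding lf_def by simp

lemma lf_eq: assumes "lf \<phi>" "lf \<psi>" "\<And>a. \<phi> (ebas a) = \<psi> (ebas a)" shows "\<phi> v = \<psi> v"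
  using lf_expand[of \<phi> v] lf_expand[of \<psi> v] assms unfolding lf_def by simp

lemma Sr_expl:
  shows "Sr sc pr r a b c = (\<Sum>q\<in>UNIV. \<Sum>t\<in>UNIV. r a q * r b t * circ_op sc pr (ebas t) (ebas q) c)
     - (\<Sum>q\<in>UNIV. \<Sum>s\<in>UNIV. r a q * r s c * odot_op sc pr (ebas q) (ebas s) b)
     - (\<Sum>p\<in>UNIV. \<Sum>s\<in>UNIV. r p b * r s c * sc (ebas p) (ebas s) a)"
  unfolding Sr_def
  by (simp add: right_diff_distrib sum_subtractf ebas_mult1 ebas_mult2 if0_mult1 if0_mult2 sum_if0 mult.assoc)

lemma tapp_id2:
  assumes "\<And>u v. F (vadd u v) = vadd (F u) (F v)" "\<And>c u. F (vscale c u) = vscale c (F u)"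
    and sym: "flip s = s"
  shows "tapp F id s a b = pair (ebas a) (F (Tmap s (ebas b)))"
proof -
  have e: "pair (ebas a) (F (Tmap s (ebas b))) = (\<Sum>j\<in>UNIV. Tmap s (ebas b) j * pair (ebas a) (F (ebas j)))"
    by (rule lf_expand) (simp_all only: assms pair_vadd2 pair_vscale2)
  have "s b j = s j b" for j using sym unfolding flip_def by metis
  then show ?thesis
    unfolding e unfolding tapp_def Tmap_ebas pair_ebas id_def
    by (simp add: ebas_mult1 ebas_mult2 if0_mult1 if0_mult2 sum_if0 mult.commute)
qed

lemma tapp_id1:
  assumes "\<And>u v. G (vadd u v) = vadd (G u) (G v)" "\<And>c u. G (vscale c u) = vscale c (G u)"
  shows "tapp id G s a b = pair (ebas b) (G (Tmap s (ebas a)))"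
proof -
  have e: "pair (ebas b) (G (Tmap s (ebas a))) = (\<Sum>j\<in>UNIV. Tmap s (ebas a) j * pair (ebas b) (G (ebas j)))"
    by (rule lf_expand) (simp_all only: assms pair_vadd2 pair_vscale2)
  show ?thesis
    unfolding e unfolding tapp_def Tmap_ebas pair_ebas id_def
    by (simp add: ebas_mult1 ebas_mult2 if0_mult1 if0_mult2 sum_if0 mult.commute)
qed

lemma vadd4: "vadd (vadd a b) (vadd c d) = vadd (vadd a c) (vadd b d)"
  by (simp add: vadd_def fun_eq_iff algebra_simps)
lemma vscale_vadd: "vadd (vscale c a) (vscale c b) = vscale c (vadd a b)"
  by (simp add: vadd_def vscale_def fun_eq_iff algebra_simps)



context
  fixes sc pr :: "('k::field,'n::finite) bop"
  assumes bsc: "bilinear_op sc" and bpr: "bilinear_op pr"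
begin

lemmas R = bil_rules[OF bsc] bil_rules[OF bpr] Tmap_rules circ_op_def odot_op_def star_op_def

lemma S_gen:
  assumes S0: "Sr sc pr r = (\<lambda>a b c. 0)"
  shows "pair z (circ_op sc pr (Tmap r y) (Tmap r x)) - pair y (odot_op sc pr (Tmap r x) (Tmap (flip r) z))
     - pair x (sc (Tmap (flip r) y) (Tmap (flip r) z)) = 0"
proof -
  define G where "G x y z = pair z (circ_op sc pr (Tmap r y) (Tmap r x)) - pair y (odot_op sc pr (Tmap r x) (Tmap (flip r) z))
     - pair x (sc (Tmap (flip r) y) (Tmap (flip r) z))" for x y z
  have bc: "bilinear_op (circ_op sc pr)" unfolding bilinear_op_def circ_op_def
    by (simp add: bil_rules[OF bsc] bil_rules[OF bpr]) (simp add: vadd4 vscale_vadd)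
  have bo: "bilinear_op (odot_op sc pr)" unfolding bilinear_op_def odot_op_def
    by (simp add: bil_rules[OF bsc] bil_rules[OF bpr]) (simp add: vadd4 vscale_vadd)
  have base: "G (ebas a) (ebas b) (ebas c) = 0" for a b c
  proof -
    have e1: "pair (ebas c) (circ_op sc pr (Tmap r (ebas b)) (Tmap r (ebas a)))
       = (\<Sum>j\<in>UNIV. \<Sum>k\<in>UNIV. r b j * r a k * circ_op sc pr (ebas j) (ebas k) c)"
      by (subst bil_expand[OF bc]) (simp add: Tmap_ebas)
    have e2: "pair (ebas b) (odot_op sc pr (Tmap r (ebas a)) (Tmap (flip r) (ebas c)))
       = (\<Sum>j\<in>UNIV. \<Sum>k\<in>UNIV. r a j * r k c * odot_op sc pr (ebas j) (ebas k) b)"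
      by (subst bil_expand[OF bo]) (simp add: Tmap_ebas flip_def)
    have e3: "pair (ebas a) (sc (Tmap (flip r) (ebas b)) (Tmap (flip r) (ebas c)))
       = (\<Sum>j\<in>UNIV. \<Sum>k\<in>UNIV. r j b * r k c * sc (ebas j) (ebas k) a)"
      by (subst bil_expand[OF bsc]) (simp add: Tmap_ebas flip_def)
    have "G (ebas a) (ebas b) (ebas c) = Sr sc pr r a b c"
      unfolding G_def Sr_expl e1 e2 e3
      by (subst (2) sum.swap) (simp add: mult.commute)
    then show ?thesis using S0 by simp
  qed
  have l1: "lf (\<lambda>x. G x y z)" for y z unfolding lf_def G_def by (simp add: R algebra_simps)
  have l2: "lf (\<lambda>y. G x y z)" for x z unfolding lf_def G_def by (simp add: R algebra_simps)
  have l3: "lf (\<lambda>z. G x y z)" for x y unfolding lf_def G_def by (simp add: R algebra_simps)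
  have "G (ebas a) (ebas b) z = 0" for a b by (rule lf_zero[OF l3 base])
  then have "G (ebas a) y z = 0" for a by (rule lf_zero[OF l2])
  then have "G x y z = 0" by (rule lf_zero[OF l1])
  then show ?thesis unfolding G_def .
qed

lemma lin_ops:
  "\<And>u v. odot_op sc pr x (vadd u v) = vadd (odot_op sc pr x u) (odot_op sc pr x v)"
  "\<And>c u. odot_op sc pr x (vscale c u) = vscale c (odot_op sc pr x u)"
  "\<And>u v. circ_op sc pr (vadd u v) x = vadd (circ_op sc pr u x) (circ_op sc pr v x)"
  "\<And>c u. circ_op sc pr (vscale c u) x = vscale c (circ_op sc pr u x)"
  "\<And>u v. star_op sc pr x (vadd u v) = vadd (star_op sc pr x u) (star_op sc pr x v)"
  "\<And>c u. star_op sc pr x (vscale c u) = vscale c (star_op sc pr x u)"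
  "\<And>u v. pr (vadd u v) x = vadd (pr u x) (pr v x)"
  "\<And>c u. pr (vscale c u) x = vscale c (pr u x)"
  "\<And>u v. circ_op sc pr x (vadd u v) = vadd (circ_op sc pr x u) (circ_op sc pr x v)"
  "\<And>c u. circ_op sc pr x (vscale c u) = vscale c (circ_op sc pr x u)"
  "\<And>u v. odot_op sc pr (vadd u v) x = vadd (odot_op sc pr u x) (odot_op sc pr v x)"
  "\<And>c u. odot_op sc pr (vscale c u) x = vscale c (odot_op sc pr u x)"
  "\<And>u v. pr x (vadd u v) = vadd (pr x u) (pr x v)"
  "\<And>c u. pr x (vscale c u) = vscale c (pr x u)"
  by (simp_all add: R vadd4 vscale_vadd)

lemma Inv_gen:
  assumes inv: "invariant sc pr (tadd r (flip r))"
  shows "pair \<xi> (odot_op sc pr x (Tmap (tadd r (flip r)) \<eta>)) = pair \<eta> (circ_op sc pr (Tmap (tadd r (flip r)) \<xi>) x)"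
    and "pair \<xi> (star_op sc pr x (Tmap (tadd r (flip r)) \<eta>)) = pair \<eta> (pr (Tmap (tadd r (flip r)) \<xi>) x)"
proof -
  define s where "s = tadd r (flip r)"
  have fs: "flip s = s" unfolding s_def by (rule flip_sym)
  have i1: "tapp (\<lambda>v. odot_op sc pr x v) id s a b - tapp id (\<lambda>v. circ_op sc pr v x) s a b = 0" for x a b
    using inv unfolding invariant_def s_def by blast
  have i2: "tapp (\<lambda>v. star_op sc pr x v) id s a b - tapp id (\<lambda>v. pr v x) s a b = 0" for x a b
    using inv fs unfolding invariant_def s_def by metis
  define H1 where "H1 \<xi> \<eta> = pair \<xi> (odot_op sc pr x (Tmap s \<eta>)) - pair \<eta> (circ_op sc pr (Tmap s \<xi>) x)" for \<xi> \<eta>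
  define H2 where "H2 \<xi> \<eta> = pair \<xi> (star_op sc pr x (Tmap s \<eta>)) - pair \<eta> (pr (Tmap s \<xi>) x)" for \<xi> \<eta>
  have b1: "H1 (ebas a) (ebas b) = 0" for a b
    using i1[of x a b] unfolding H1_def
    by (subst (asm) tapp_id2[OF lin_ops(1,2) fs], subst (asm) tapp_id1[OF lin_ops(3,4)])
  have b2: "H2 (ebas a) (ebas b) = 0" for a b
    using i2[of x a b] unfolding H2_def
    by (subst (asm) tapp_id2[OF lin_ops(5,6) fs], subst (asm) tapp_id1[OF lin_ops(7,8)])
  have l11: "lf (\<lambda>\<xi>. H1 \<xi> \<eta>)" for \<eta> unfolding lf_def H1_def by (simp add: R algebra_simps)
  have l12: "lf (\<lambda>\<eta>. H1 \<xi> \<eta>)" for \<xi> unfolding lf_def H1_def by (simp add: R algebra_simps)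
  have l21: "lf (\<lambda>\<xi>. H2 \<xi> \<eta>)" for \<eta> unfolding lf_def H2_def by (simp add: R algebra_simps)
  have l22: "lf (\<lambda>\<eta>. H2 \<xi> \<eta>)" for \<xi> unfolding lf_def H2_def by (simp add: R algebra_simps)
  have "H1 (ebas a) \<eta> = 0" for a by (rule lf_zero[OF l12 b1])
  then have "H1 \<xi> \<eta> = 0" by (rule lf_zero[OF l11])
  then show "pair \<xi> (odot_op sc pr x (Tmap (tadd r (flip r)) \<eta>)) = pair \<eta> (circ_op sc pr (Tmap (tadd r (flip r)) \<xi>) x)"
    unfolding H1_def s_def by simp
  have "H2 (ebas a) \<eta> = 0" for a by (rule lf_zero[OF l22 b2])
  then have "H2 \<xi> \<eta> = 0" by (rule lf_zero[OF l21])
  then show "pair \<xi> (star_op sc pr x (Tmap (tadd r (flip r)) \<eta>)) = pair \<eta> (pr (Tmap (tadd r (flip r)) \<xi>) x)"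
    unfolding H2_def s_def by simp
qed

end



lemma lcb: fixes L :: "'a::comm_ring"
  assumes "L1 = R1" "L2 = R2" "L - R = ca * (L1 - R1) + cb * (L2 - R2)" shows "L = R"
  using assms by simp
lemma lcc: fixes L :: "'a::comm_ring"
  assumes "L1 = R1" "L2 = R2" "L3 = R3" "L - R = ca * (L1 - R1) + cb * (L2 - R2) + cc * (L3 - R3)" shows "L = R"
  using assms by simp
lemma lcd: fixes L :: "'a::comm_ring"
  assumes "L1 = R1" "L2 = R2" "L3 = R3" "L4 = R4"
    "L - R = ca * (L1 - R1) + cb * (L2 - R2) + cc * (L3 - R3) + cd * (L4 - R4)" shows "L = R"
  using assms by simp

lemma lce: fixes L :: "'a::comm_ring"
  assumes "L1 = R1" "L2 = R2" "L3 = R3" "L4 = R4" "L5 = R5"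
    "L - R = ca * (L1 - R1) + cb * (L2 - R2) + cc * (L3 - R3) + cd * (L4 - R4) + ce * (L5 - R5)" shows "L = R"
  using assms by simp

context
  fixes sc pr :: "('k::field,'n::finite) bop"
  assumes bsc: "bilinear_op sc" and bpr: "bilinear_op pr"
begin

lemmas R' = bil_rules[OF bsc] bil_rules[OF bpr] Tmap_rules circ_op_def odot_op_def star_op_def

lemma Inv_der:
  assumes inv: "invariant sc pr (tadd r (flip r))"
  defines "J \<equiv> Tmap (tadd r (flip r))"
  shows Inv3: "pair \<zeta> (odot_op sc pr (J w) y) = - pair w (sc (J \<zeta>) y)"
    and Inv4: "pair \<eta> (circ_op sc pr x (J w)) = - pair w (sc x (J \<eta>))"
    and Inv5: "pair \<eta> (pr x (J w)) = pair w (pr x (J \<eta>))"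
proof -
  note I1 = Inv_gen(1)[OF bsc bpr inv, folded J_def] and I2 = Inv_gen(2)[OF bsc bpr inv, folded J_def]
  show "pair \<zeta> (odot_op sc pr (J w) y) = - pair w (sc (J \<zeta>) y)"
    using I1[of \<zeta> y w] I2[of \<zeta> y w] by (simp add: R') algebra
  have I4: "pair \<eta> (circ_op sc pr x (J w)) = - pair w (sc x (J \<eta>))" for \<eta> x w
    by (rule lcb[where ca=1 and cb=1, OF I2[of \<eta> x w] I1[of w x \<eta>]]) (simp add: R' algebra_simps)
  show "pair \<eta> (circ_op sc pr x (J w)) = - pair w (sc x (J \<eta>))" by (rule I4)
  show "pair \<eta> (pr x (J w)) = pair w (pr x (J \<eta>))"
    by (rule lcb[where ca=1 and cb="-1", OF I4[of \<eta> x w] I4[of w x \<eta>]]) (simp add: R' algebra_simps)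
qed

lemma succ_pair: "pair (succ_r sc pr r \<zeta> \<eta>) v
   = - pair \<eta> (circ_op sc pr (Tmap r \<zeta>) v) + pair \<zeta> (odot_op sc pr v (Tmap (flip r) \<eta>))"
  unfolding succ_r_def pair_vsub1
  by (simp add: dual_rep_pair[where f="\<lambda>x v. circ_op sc pr x v", OF lin_ops(9,10)[OF bsc bpr]]
      dual_rep_pair[where f="\<lambda>x v. odot_op sc pr v x", OF lin_ops(11,12)[OF bsc bpr]])

lemma prec_pair: "pair (prec_r sc pr r \<zeta> \<eta>) v
   = - pair \<eta> (pr (Tmap (flip r) \<zeta>) v) + pair \<zeta> (star_op sc pr (Tmap r \<eta>) v)"
  unfolding prec_r_def pair_vsub1
  by (simp add: dual_rep_pair[where f="\<lambda>x v. pr x v", OF lin_ops(13,14)[OF bsc bpr]]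
      dual_rep_pair[where f="\<lambda>x v. star_op sc pr x v", OF lin_ops(5,6)[OF bsc bpr]])

lemma hom_succ1:
  assumes S0: "Sr sc pr r = (\<lambda>a b c. 0)" and inv: "invariant sc pr (tadd r (flip r))"
  shows "Tmap r (succ_r sc pr r \<zeta> \<eta>) = sc (Tmap r \<zeta>) (Tmap r \<eta>)"
proof (rule vec_eqI)
  fix w
  have "pair w (Tmap r (succ_r sc pr r \<zeta> \<eta>)) = pair (succ_r sc pr r \<zeta> \<eta>) (Tmap (flip r) w)"
    by (rule Tmap_adj)
  also have "\<dots> = pair w (sc (Tmap r \<zeta>) (Tmap r \<eta>))"
    unfolding succ_pair
    by (rule lcc[where ca=1 and cb=1 and cc="-1", OF S_gen[OF bsc bpr S0, of \<eta> \<zeta> w]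
          Inv3[OF inv, of \<zeta> w "Tmap (flip r) \<eta>"] Inv4[OF inv, of \<eta> "Tmap r \<zeta>" w]])
       (simp add: R' Tmap_tadd algebra_simps)
  finally show "pair w (Tmap r (succ_r sc pr r \<zeta> \<eta>)) = pair w (sc (Tmap r \<zeta>) (Tmap r \<eta>))" .
qed

lemma hom_succ2:
  assumes S0: "Sr sc pr r = (\<lambda>a b c. 0)"
  shows "vneg (Tmap (flip r) (succ_r sc pr r \<zeta> \<eta>)) = sc (vneg (Tmap (flip r) \<zeta>)) (vneg (Tmap (flip r) \<eta>))"
proof (rule vec_eqI)
  fix w
  have "pair w (Tmap (flip r) (succ_r sc pr r \<zeta> \<eta>)) = pair (succ_r sc pr r \<zeta> \<eta>) (Tmap r w)"
    using Tmap_adj[of w "flip r"] by simp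
  also have "\<dots> = - pair w (sc (Tmap (flip r) \<zeta>) (Tmap (flip r) \<eta>))"
    unfolding succ_pair
    by (rule lcb[where ca="-1" and cb=0, OF S_gen[OF bsc bpr S0, of \<eta> \<zeta> w] refl])
       (simp add: R' algebra_simps)
  finally show "pair w (vneg (Tmap (flip r) (succ_r sc pr r \<zeta> \<eta>))) =
     pair w (sc (vneg (Tmap (flip r) \<zeta>)) (vneg (Tmap (flip r) \<eta>)))" by (simp add: R')
qed

lemma hom_prec2:
  assumes S0: "Sr sc pr r = (\<lambda>a b c. 0)" and inv: "invariant sc pr (tadd r (flip r))"
  shows "vneg (Tmap (flip r) (prec_r sc pr r \<zeta> \<eta>)) = pr (vneg (Tmap (flip r) \<zeta>)) (vneg (Tmap (flip r) \<eta>))"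
proof (rule vec_eqI)
  fix w
  have "pair w (Tmap (flip r) (prec_r sc pr r \<zeta> \<eta>)) = pair (prec_r sc pr r \<zeta> \<eta>) (Tmap r w)"
    using Tmap_adj[of w "flip r"] by simp
  also have "\<dots> = - pair w (pr (Tmap (flip r) \<zeta>) (Tmap (flip r) \<eta>))"
    unfolding prec_pair
    by (rule lcc[where ca=1 and cb=1 and cc=1, OF S_gen[OF bsc bpr S0, of \<zeta> \<eta> w]
          S_gen[OF bsc bpr S0, of \<zeta> w \<eta>] Inv3[OF inv, of w \<eta> "Tmap (flip r) \<zeta>"]])
       (simp add: R' Tmap_tadd algebra_simps)
  finally show "pair w (vneg (Tmap (flip r) (prec_r sc pr r \<zeta> \<eta>))) =
     pair w (pr (vneg (Tmap (flip r) \<zeta>)) (vneg (Tmap (flip r) \<eta>)))" by (simp add: R')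
qed

lemma hom_prec1:
  assumes S0: "Sr sc pr r = (\<lambda>a b c. 0)" and inv: "invariant sc pr (tadd r (flip r))"
  shows "Tmap r (prec_r sc pr r \<zeta> \<eta>) = pr (Tmap r \<zeta>) (Tmap r \<eta>)"
proof (rule vec_eqI)
  fix w
  have "pair w (Tmap r (prec_r sc pr r \<zeta> \<eta>)) = pair (prec_r sc pr r \<zeta> \<eta>) (Tmap (flip r) w)"
    by (rule Tmap_adj)
  also have "\<dots> = pair w (pr (Tmap r \<zeta>) (Tmap r \<eta>))"
    unfolding prec_pair
    by (rule lce[where ca="-1" and cb="-1" and cc="-1" and cd=1 and ce="-1", OF S_gen[OF bsc bpr S0, of \<zeta> \<eta> w]
          S_gen[OF bsc bpr S0, of \<zeta> w \<eta>] Inv3[OF inv, of w \<eta> "Tmap (flip r) \<zeta>"]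
          Inv_gen(2)[OF bsc bpr inv, of \<zeta> "Tmap r \<eta>" w] Inv5[OF inv, of \<eta> "Tmap (flip r) \<zeta>" w]])
       (simp add: R' Tmap_tadd algebra_simps)
  finally show "pair w (Tmap r (prec_r sc pr r \<zeta> \<eta>)) = pair w (pr (Tmap r \<zeta>) (Tmap r \<eta>))" .
qed

end



lemma pullback_LD:
  fixes s1 p1 sc pr :: "('k::field,'n::finite) bop"
  assumes LD: "LD_alg sc pr"
    and fa: "\<And>x y. f (vadd x y) = vadd (f x) (f y)" and fs: "\<And>c x. f (vscale c x) = vscale c (f x)"
    and ga: "\<And>x y. g (vadd x y) = vadd (g x) (g y)" and gs: "\<And>c x. g (vscale c x) = vscale c (g x)"
    and fh1: "\<And>x y. f (s1 x y) = sc (f x) (f y)" and fh2: "\<And>x y. f (p1 x y) = pr (f x) (f y)"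
    and gh1: "\<And>x y. g (s1 x y) = sc (g x) (g y)" and gh2: "\<And>x y. g (p1 x y) = pr (g x) (g y)"
    and inj: "\<And>x y. f x = f y \<Longrightarrow> g x = g y \<Longrightarrow> x = y"
  shows "LD_alg s1 p1"
proof -
  have bsc: "bilinear_op sc" and bpr: "bilinear_op pr" using LD unfolding LD_alg_def by auto
  have fv: "f (vsub x y) = vsub (f x) (f y)" for x y by (simp add: vsub_as fa fs)
  have gv: "g (vsub x y) = vsub (g x) (g y)" for x y by (simp add: vsub_as ga gs)
  have fc: "f (circ_op s1 p1 x y) = circ_op sc pr (f x) (f y)" for x y by (simp add: circ_op_def fa fh1 fh2)
  have gc: "g (circ_op s1 p1 x y) = circ_op sc pr (g x) (g y)" for x y by (simp add: circ_op_def ga gh1 gh2)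
  note rules = fa fs ga gs fh1 fh2 gh1 gh2 fv gv fc gc bil_rules[OF bsc] bil_rules[OF bpr]
  have ld1: "sc (circ_op sc pr x y) z = vsub (sc x (sc y z)) (sc y (sc x z))"
   and ld2: "vadd (pr y (circ_op sc pr x z)) (pr (sc x y) z) = sc x (pr y z)"
   and ld3: "pr x (circ_op sc pr y z) = vadd (pr (pr x y) z) (sc y (pr x z))" for x y z
    using LD unfolding LD_alg_def by auto
  show ?thesis unfolding LD_alg_def bilinear_op_def
    by (intro conjI allI; rule inj; simp only: rules; rule ld1 ld2 ld3)
qed

lemma vneg_vadd: "vneg (vadd a b) = vadd (vneg a) (vneg b)" by (simp add: vneg_def vadd_def fun_eq_iff)
lemma vneg_vscale: "vneg (vscale c a) = vscale c (vneg a)" by (simp add: vneg_def vscale_def fun_eq_iff)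
lemma vneg_inj: "vneg a = vneg b \<Longrightarrow> a = b" by (simp add: vneg_def fun_eq_iff)
lemma vsub_vneg: "vsub a (vneg b) = vadd a b" by (simp add: vneg_def vsub_def vadd_def fun_eq_iff)

theorem mainTheorem10:
  fixes sc pr :: "('k::field, 'n::finite) bop" and r :: "('k,'n) tens2"
  assumes LD: "LD_alg sc pr"
    and S0: "Sr sc pr r = (\<lambda>a b c. 0)"
    and inv: "invariant sc pr (tadd r (flip r))"
    and iso: "bij (Tmap (tadd r (flip r)))"
  shows "LD_subalg_prod sc pr (range (Phi r))
    \<and> LD_alg (succ_r sc pr r) (prec_r sc pr r)
    \<and> (\<forall>\<zeta> \<eta>. Phi r (vadd \<zeta> \<eta>) = padd (Phi r \<zeta>) (Phi r \<eta>))
    \<and> (\<forall>c \<zeta>. Phi r (vscale c \<zeta>) = pscale c (Phi r \<zeta>))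
    \<and> inj (Phi r)
    \<and> (\<forall>\<zeta> \<eta>. Phi r (succ_r sc pr r \<zeta> \<eta>) = prod_op sc (Phi r \<zeta>) (Phi r \<eta>))
    \<and> (\<forall>\<zeta> \<eta>. Phi r (prec_r sc pr r \<zeta> \<eta>) = prod_op pr (Phi r \<zeta>) (Phi r \<eta>))
    \<and> (\<forall>x. \<exists>!u. u \<in> range (Phi r) \<and> x = vsub (fst u) (snd u))"
proof -
  have bsc: "bilinear_op sc" and bpr: "bilinear_op pr" using LD unfolding LD_alg_def by auto
  define J where "J = Tmap (tadd r (flip r))"
  have Jeq: "J z = vadd (Tmap r z) (Tmap (flip r) z)" for z unfolding J_def by (rule Tmap_tadd)
  have add: "Phi r (vadd \<zeta> \<eta>) = padd (Phi r \<zeta>) (Phi r \<eta>)" for \<zeta> \<eta>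
    unfolding Phi_def padd_def by (simp add: Tmap_rules vneg_vadd)
  have scl: "Phi r (vscale c \<zeta>) = pscale c (Phi r \<zeta>)" for c \<zeta>
    unfolding Phi_def pscale_def by (simp add: Tmap_rules vneg_vscale)
  have hs: "Phi r (succ_r sc pr r \<zeta> \<eta>) = prod_op sc (Phi r \<zeta>) (Phi r \<eta>)" for \<zeta> \<eta>
    unfolding Phi_def prod_op_def
    using hom_succ1[OF bsc bpr S0 inv] hom_succ2[OF bsc bpr S0] by simp
  have hp: "Phi r (prec_r sc pr r \<zeta> \<eta>) = prod_op pr (Phi r \<zeta>) (Phi r \<eta>)" for \<zeta> \<eta>
    unfolding Phi_def prod_op_def
    using hom_prec1[OF bsc bpr S0 inv] hom_prec2[OF bsc bpr S0 inv] by simp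
  have injJ: "x = y" if "Tmap r x = Tmap r y" "Tmap (flip r) x = Tmap (flip r) y" for x y
  proof -
    have "J x = J y" using that by (simp add: Jeq)
    then show ?thesis using iso unfolding J_def bij_def inj_def by blast
  qed
  have injP: "inj (Phi r)"
  proof (rule injI)
    fix x y assume "Phi r x = Phi r y"
    then show "x = y" unfolding Phi_def by (auto intro: injJ dest: vneg_inj)
  qed
  have dec: "vsub (fst (Phi r z)) (snd (Phi r z)) = J z" for z
    unfolding Phi_def by (simp add: vsub_vneg Jeq)
  have ldd: "LD_alg (succ_r sc pr r) (prec_r sc pr r)"
    by (rule pullback_LD[OF LD, where f="Tmap r" and g="\<lambda>z. vneg (Tmap (flip r) z)"])
       (auto simp: Tmap_rules vneg_vadd vneg_vscale hom_succ1[OF bsc bpr S0 inv] hom_succ2[OF bsc bpr S0]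
          hom_prec1[OF bsc bpr S0 inv] hom_prec2[OF bsc bpr S0 inv] intro: injJ dest: vneg_inj)
  have zero: "Phi r vzero = (vzero, vzero)"
    unfolding Phi_def by (simp add: Tmap_def vzero_def vneg_def)
  have sub: "LD_subalg_prod sc pr (range (Phi r))"
    unfolding LD_subalg_prod_def
  proof (intro conjI ballI allI)
    show "(vzero, vzero) \<in> range (Phi r)" using zero by (metis rangeI)
  next
    fix u w assume "u \<in> range (Phi r)" "w \<in> range (Phi r)"
    then obtain a b where u: "u = Phi r a" and w: "w = Phi r b" by auto
    show "padd u w \<in> range (Phi r)" unfolding u w add[symmetric] by simp
    show "prod_op sc u w \<in> range (Phi r)" unfolding u w hs[symmetric] by simp
    show "prod_op pr u w \<in> range (Phi r)" unfolding u w hp[symmetric] by simp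
  next
    fix c u assume "u \<in> range (Phi r)"
    then obtain a where u: "u = Phi r a" by auto
    show "pscale c u \<in> range (Phi r)" unfolding u scl[symmetric] by simp
  qed
  have uniq: "\<exists>!u. u \<in> range (Phi r) \<and> x = vsub (fst u) (snd u)" for x
  proof -
    obtain z where z: "J z = x" using iso unfolding J_def bij_def surj_def by metis
    show ?thesis
    proof (rule ex1I[where a="Phi r z"])
      show "Phi r z \<in> range (Phi r) \<and> x = vsub (fst (Phi r z)) (snd (Phi r z))" using dec z by simp
    next
      fix u assume "u \<in> range (Phi r) \<and> x = vsub (fst u) (snd u)"
      then obtain y where u: "u = Phi r y" and "x = J y" using dec by auto
      then have "J y = J z" using z by simp
      then have "y = z" using iso unfolding J_def bij_def inj_def by blast
      then show "u = Phi r z" using u by simp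
    qed
  qed
  show ?thesis using sub ldd add scl injP hs hp uniq by blast
qed


end
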